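(* For every $C>0$ there exist a two-element state space $\Omega=\{a,b\}$, reversible ergodic Markov chains $\mathcal{M}$ and $\mathcal{M}'$ on $\Omega$ with the same stationary distribution $\pi$, and an $(\mathcal{M},\mathcal{M}')$-flow $f$ with $A(f)\le 3$, such that $$\tau_a\Big(\mathcal{M},\frac14\Big)\ >\ C\cdot A(f)\left[\tau\Big(\mathcal{M}',\frac{1}{2e}\Big)+1\right]\ln\frac{1}{\frac14\,\pi(a)}.$$ Concretely one may take $\mathcal{M}$ with $P(a,b)=P(b,a)=1-\delta$, $P(a,a)=P(b,b)=\delta$ for sufficiently small $\delta\in(0,\frac12]$, and $\mathcal{M}'$ the chain with $P'(x,y)=\frac12$ for all $x,y\in\Omega$. (Thus, unlike in the case of odd flows, no bound of this form in terms of the congestion of an arbitrary flow is possible.)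
   Context: A (discrete-time) Markov chain on a finite state space $\Omega$ with transition matrix $P$ is ergodic if irreducible and aperiodic; it then has a unique stationary distribution $\pi>0$. It is reversible if $\pi(x)P(x,y)=\pi(y)P(y,x)$. Variation distance: $\|\theta_1-\theta_2\|=\frac12\sum_i|\theta_1(i)-\theta_2(i)|$. Mixing time: $\tau_x(\mathcal{M},\varepsilon)=\min\{t>0 \text{ integer}: \|P^{t'}(x,\cdot)-\pi\|\le\varepsilon \ \forall t'\ge t\}$, $\tau(\mathcal{M},\varepsilon)=\max_x\tau_x(\mathcal{M},\varepsilon)$. Flows: Let $\mathcal{M}$ have transition matrix $P$ and stationary distribution $\pi$, and $\mathcal{M}'$ have transition matrix $P'$ and stationary distribution $\pi'$. Let $E^*(\mathcal{M})=\{(x,y): P(x,y)>0\}$ (pairs not necessarily distinct), similarly $E^*(\mathcal{M}')$. For $(x,y)\in E^*(\mathcal{M}')$, $\mathcal{P}_{x,y}$ is the set of paths $\gamma=(x=x_0,\dots,x_k=y)$ with each $(x_i,x_{i+1})\in E^*(\mathcal{M})$ and each $(z,w)\in E^*(\mathcal{M})$ appearing at most twice as a consecutive pair on $\gamma$; $|\gamma|=k$. $\mathcal{P}=\bigcup_{(x,y)\in E^*(\mathcal{M}')}\mathcal{P}_{x,y}$. An $(\mathcal{M},\mathcal{M}')$-flow is $f:\mathcal{P}\to[0,1]$ with $\sum_{\gamma\in\mathcal{P}_{x,y}}f(\gamma)=\pi'(x)P'(x,y)$ for all $(x,y)\in E^*(\mathcal{M}')$. With $r((z,w),\gamma)$ the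 number of times $(z,w)$ appears on $\gamma$, $A_{z,w}(f)=\frac{1}{\pi(z)P(z,w)}\sum_{\gamma:(z,w)\in\gamma}r((z,w),\gamma)|\gamma|f(\gamma)$ and $A(f)=\max_{(z,w)\in E^*(\mathcal{M})}A_{z,w}(f)$. *)

theory Defs
  imports Complex_Main
begin

(* A Markov chain on a finite state space S is given by a transition matrix
   P :: 'a => 'a => real (only its values on S x S matter). *)

definition stochastic :: "'a set \<Rightarrow> ('a \<Rightarrow> 'a \<Rightarrow> real) \<Rightarrow> bool" where
  "stochastic S P \<longleftrightarrow> finite S \<and> S \<noteq> {} \<and>
     (\<forall>x\<in>S. \<forall>y\<in>S. 0 \<le> P x y) \<and> (\<forall>x\<in>S. (\<Sum>y\<in>S. P x y) = 1)"

fun matpow :: "'a set \<Rightarrow> ('a \<Rightarrow> 'a \<Rightarrow> real) \<Rightarrow> nat \<Rightarrow> 'a \<Rightarrow> 'a \<Rightarrow> real" where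
  "matpow S P 0 x y = (if x = y then 1 else 0)"
| "matpow S P (Suc t) x y = (\<Sum>z\<in>S. matpow S P t x z * P z y)"

definition irreducible_chain :: "'a set \<Rightarrow> ('a \<Rightarrow> 'a \<Rightarrow> real) \<Rightarrow> bool" where
  "irreducible_chain S P \<longleftrightarrow> (\<forall>x\<in>S. \<forall>y\<in>S. \<exists>t. 0 < matpow S P t x y)"

definition aperiodic_chain :: "'a set \<Rightarrow> ('a \<Rightarrow> 'a \<Rightarrow> real) \<Rightarrow> bool" where
  "aperiodic_chain S P \<longleftrightarrow> (\<forall>x\<in>S. Gcd {t. 1 \<le> t \<and> 0 < matpow S P t x x} = 1)"

definition ergodic :: "'a set \<Rightarrow> ('a \<Rightarrow> 'a \<Rightarrow> real) \<Rightarrow> bool" where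
  "ergodic S P \<longleftrightarrow> stochastic S P \<and> irreducible_chain S P \<and> aperiodic_chain S P"

definition stationary :: "'a set \<Rightarrow> ('a \<Rightarrow> 'a \<Rightarrow> real) \<Rightarrow> ('a \<Rightarrow> real) \<Rightarrow> bool" where
  "stationary S P p \<longleftrightarrow> (\<forall>x\<in>S. 0 \<le> p x) \<and> (\<Sum>x\<in>S. p x) = 1 \<and>
     (\<forall>y\<in>S. (\<Sum>x\<in>S. p x * P x y) = p y)"

definition reversible :: "'a set \<Rightarrow> ('a \<Rightarrow> 'a \<Rightarrow> real) \<Rightarrow> ('a \<Rightarrow> real) \<Rightarrow> bool" where
  "reversible S P p \<longleftrightarrow> (\<forall>x\<in>S. \<forall>y\<in>S. p x * P x y = p y * P y x)"

definition tvdist :: "'a set \<Rightarrow> ('a \<Rightarrow> real) \<Rightarrow> ('a \<Rightarrow> real) \<Rightarrow> real" where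
  "tvdist S \<mu> \<nu> = (1/2) * (\<Sum>i\<in>S. \<bar>\<mu> i - \<nu> i\<bar>)"

definition mixing_time_from ::
  "'a set \<Rightarrow> ('a \<Rightarrow> 'a \<Rightarrow> real) \<Rightarrow> ('a \<Rightarrow> real) \<Rightarrow> 'a \<Rightarrow> real \<Rightarrow> nat" where
  "mixing_time_from S P p x \<epsilon> =
     (LEAST t. 0 < t \<and> (\<forall>t'\<ge>t. tvdist S (matpow S P t' x) p \<le> \<epsilon>))"

definition mixing_time ::
  "'a set \<Rightarrow> ('a \<Rightarrow> 'a \<Rightarrow> real) \<Rightarrow> ('a \<Rightarrow> real) \<Rightarrow> real \<Rightarrow> nat" where
  "mixing_time S P p \<epsilon> = Max ((\<lambda>x. mixing_time_from S P p x \<epsilon>) ` S)"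

definition Estar :: "'a set \<Rightarrow> ('a \<Rightarrow> 'a \<Rightarrow> real) \<Rightarrow> ('a \<times> 'a) set" where
  "Estar S P = {(x, y). x \<in> S \<and> y \<in> S \<and> 0 < P x y}"

definition path_edges :: "'a list \<Rightarrow> ('a \<times> 'a) list" where
  "path_edges \<gamma> = zip \<gamma> (tl \<gamma>)"

definition path_len :: "'a list \<Rightarrow> nat" where
  "path_len \<gamma> = length \<gamma> - 1"

definition paths_xy :: "'a set \<Rightarrow> ('a \<Rightarrow> 'a \<Rightarrow> real) \<Rightarrow> 'a \<Rightarrow> 'a \<Rightarrow> 'a list set" where
  "paths_xy S P x y = {\<gamma>. \<gamma> \<noteq> [] \<and> hd \<gamma> = x \<and> last \<gamma> = y \<and>
      (\<forall>e\<in>set (path_edges \<gamma>). e \<in> Estar S P) \<and>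
      (\<forall>e. count_list (path_edges \<gamma>) e \<le> 2)}"

definition flow_paths ::
  "'a set \<Rightarrow> ('a \<Rightarrow> 'a \<Rightarrow> real) \<Rightarrow> ('a \<Rightarrow> 'a \<Rightarrow> real) \<Rightarrow> 'a list set" where
  "flow_paths S P P' = (\<Union>(x, y)\<in>Estar S P'. paths_xy S P x y)"

(* an (M,M')-flow; M = (S,P) with stationary p, M' = (S,P') with stationary q *)
definition is_flow ::
  "'a set \<Rightarrow> ('a \<Rightarrow> 'a \<Rightarrow> real) \<Rightarrow> ('a \<Rightarrow> 'a \<Rightarrow> real) \<Rightarrow> ('a \<Rightarrow> real)
     \<Rightarrow> ('a list \<Rightarrow> real) \<Rightarrow> bool" where
  "is_flow S P P' q f \<longleftrightarrow>
     (\<forall>\<gamma>\<in>flow_paths S P P'. 0 \<le> f \<gamma> \<and> f \<gamma> \<le> 1) \<and>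
     (\<forall>(x, y)\<in>Estar S P'. (\<Sum>\<gamma>\<in>paths_xy S P x y. f \<gamma>) = q x * P' x y)"

definition edge_congestion ::
  "'a set \<Rightarrow> ('a \<Rightarrow> 'a \<Rightarrow> real) \<Rightarrow> ('a \<Rightarrow> real) \<Rightarrow> ('a \<Rightarrow> 'a \<Rightarrow> real)
     \<Rightarrow> ('a list \<Rightarrow> real) \<Rightarrow> 'a \<Rightarrow> 'a \<Rightarrow> real" where
  "edge_congestion S P p P' f z w =
     (1 / (p z * P z w)) *
     (\<Sum>\<gamma>\<in>{\<gamma>\<in>flow_paths S P P'. (z, w) \<in> set (path_edges \<gamma>)}.
        real (count_list (path_edges \<gamma>) (z, w)) * real (path_len \<gamma>) * f \<gamma>)"

definition congestion ::
  "'a set \<Rightarrow> ('a \<Rightarrow> 'a \<Rightarrow> real) \<Rightarrow> ('a \<Rightarrow> real) \<Rightarrow> ('a \<Rightarrow> 'a \<Rightarrow> real)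
     \<Rightarrow> ('a list \<Rightarrow> real) \<Rightarrow> real" where
  "congestion S P p P' f =
     Max ((\<lambda>(z, w). edge_congestion S P p P' f z w) ` Estar S P)"

end

theory Submission imports Defs begin

definition Pd :: "real \<Rightarrow> nat \<Rightarrow> nat \<Rightarrow> real" where
  "Pd d x y = (if x = y then d else 1 - d)"

lemma matpow_Pd:
  assumes "x \<in> {0,1}" "y \<in> {0,1}"
  shows "matpow {0,1} (Pd d) t x y = (if x = y then (1 + (2*d-1)^t)/2 else (1 - (2*d-1)^t)/2)"
  using assms
proof (induction t arbitrary: y)
  case 0
  then show ?case by auto
next
  case (Suc t)
  define A where "A = matpow {0,1} (Pd d) t x 0"
  define B where "B = matpow {0,1} (Pd d) t x 1"
  have pd: "Pd d 0 0 = d" "Pd d 1 1 = d" "Pd d 0 1 = 1 - d" "Pd d 1 0 = 1 - d"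
    "Pd d (Suc 0) (Suc 0) = d" "Pd d 0 (Suc 0) = 1 - d" "Pd d (Suc 0) 0 = 1 - d"
    by (auto simp: Pd_def)
  have "matpow {0,1} (Pd d) (Suc t) x y = A * Pd d 0 y + B * Pd d 1 y"
    by (simp add: A_def B_def)
  also have "\<dots> = (if x = y then (1 + (2*d-1)^Suc t)/2 else (1 - (2*d-1)^Suc t)/2)"
    using Suc.prems Suc.IH[of 0] Suc.IH[of 1] unfolding A_def[symmetric] B_def[symmetric]
    by (auto simp: pd field_simps)
  finally show ?case .
qed

lemma tv_Pd:
  "tvdist {0,1} (matpow {0,1} (Pd d) t 0) (\<lambda>_. 1/2) = \<bar>2*d-1\<bar>^t / 2"
proof -
  define r where "r = (2*d-1)^t"
  have "\<bar>(1 + r)/2 - 1/2\<bar> = \<bar>r\<bar>/2" "\<bar>(1 - r)/2 - 1/2\<bar> = \<bar>r\<bar>/2" by (auto simp: abs_if field_simps)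
  note ab = this
  have e1: "matpow {0,1} (Pd d) t 0 0 = (1+r)/2" using matpow_Pd[of 0 0 d t] by (simp add: r_def)
  have e2: "matpow {0,1} (Pd d) t 0 1 = (1-r)/2" using matpow_Pd[of 0 1 d t] by (simp add: r_def)
  have "tvdist {0,1} (matpow {0,1} (Pd d) t 0) (\<lambda>_. 1/2)
     = 1/2 * (\<bar>matpow {0,1} (Pd d) t 0 0 - 1/2\<bar> + \<bar>matpow {0,1} (Pd d) t 0 1 - 1/2\<bar>)"
    by (simp add: tvdist_def)
  also have "\<dots> = \<bar>r\<bar>/2" unfolding e1 e2 ab by simp
  finally show ?thesis by (simp add: r_def power_abs)
qed

lemma tl_eq: "map snd (zip xs (tl xs)) = tl xs"
proof (induction xs)
  case (Cons x xs) then show ?case by (cases xs) auto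
qed simp

lemma paths_finite:
  assumes S: "finite S"
  shows "finite (paths_xy S P x y)"
proof -
  let ?L = "{es. set es \<subseteq> S \<times> S \<and> length es \<le> 2 * card (S \<times> S)}"
  have fL: "finite ?L" using finite_lists_length_le[of "S \<times> S"] S by simp
  have "paths_xy S P x y \<subseteq> (\<lambda>(u,es). u # map snd es) ` ({x} \<times> ?L)"
  proof
    fix g assume g: "g \<in> paths_xy S P x y"
    let ?es = "path_edges g"
    have ne: "g \<noteq> []" and hx: "hd g = x" and ed: "\<forall>e\<in>set ?es. e \<in> Estar S P"
      and cnt: "\<forall>e. count_list ?es e \<le> 2" using g by (auto simp: paths_xy_def)
    have sub: "set ?es \<subseteq> S \<times> S" using ed by (auto simp: Estar_def)
    have "length ?es = sum (count_list ?es) (S \<times> S)"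
      using sum_count_set[OF sub] S by simp
    also have "\<dots> \<le> sum (\<lambda>_. 2) (S \<times> S)" by (rule sum_mono) (use cnt in auto)
    finally have "length ?es \<le> 2 * card (S \<times> S)" by simp
    moreover have "g = x # map snd ?es"
      using ne hx tl_eq[of g] by (cases g) (auto simp: path_edges_def)
    ultimately show "g \<in> (\<lambda>(u,es). u # map snd es) ` ({x} \<times> ?L)"
      using sub by force
  qed
  moreover have "finite ((\<lambda>(u,es). u # map snd es) ` ({x} \<times> ?L))" using fL by simp
  ultimately show ?thesis by (rule finite_subset)
qed


lemma Pd_simps: "Pd d 0 0 = d" "Pd d 1 1 = d" "Pd d 0 1 = 1 - d" "Pd d 1 0 = 1 - d"
    "Pd d (Suc 0) (Suc 0) = d" "Pd d 0 (Suc 0) = 1 - d" "Pd d (Suc 0) 0 = 1 - d"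
  by (auto simp: Pd_def)

lemma matpow_one: "x \<in> {0,1} \<Longrightarrow> y \<in> {0,1} \<Longrightarrow> matpow {0,1} (Pd d) 1 x y = Pd d x y"
  using matpow_Pd[of x y d 1] by (auto simp: Pd_def)

lemma ergodic_Pd:
  assumes "0 < d" "d < 1"
  shows "ergodic {0,1} (Pd d)"
proof -
  have st: "stochastic {0,1} (Pd d)" using assms by (auto simp: stochastic_def Pd_def)
  have irr: "irreducible_chain {0,1} (Pd d)"
    unfolding irreducible_chain_def
  proof (intro ballI)
    fix x y :: nat assume xy: "x \<in> {0,1}" "y \<in> {0,1}"
    show "\<exists>t. 0 < matpow {0,1} (Pd d) t x y"
    proof (cases "x = y")
      case True then show ?thesis by (intro exI[of _ 0]) simp
    next
      case False then show ?thesis using assms matpow_one[OF xy]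
        by (intro exI[of _ 1]) (simp add: Pd_def)
    qed
  qed
  have ap: "aperiodic_chain {0,1} (Pd d)"
    unfolding aperiodic_chain_def
  proof (intro ballI)
    fix x :: nat assume x: "x \<in> {0,1}"
    have "(1::nat) \<in> {t. 1 \<le> t \<and> 0 < matpow {0,1} (Pd d) t x x}"
      using matpow_one[OF x x] assms by (simp add: Pd_def)
    then have "Gcd {t. 1 \<le> t \<and> 0 < matpow {0,1} (Pd d) t x x} dvd 1" by (rule Gcd_dvd)
    then show "Gcd {t. 1 \<le> t \<and> 0 < matpow {0,1} (Pd d) t x x} = 1" by simp
  qed
  show ?thesis using st irr ap by (simp add: ergodic_def)
qed

lemma stat_Pd: "stationary {0,1} (Pd d) (\<lambda>_. 1/2)"
  by (auto simp: stationary_def Pd_def)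

lemma rev_Pd: "reversible {0,1} (Pd d) (\<lambda>_. 1/2)"
  by (auto simp: reversible_def Pd_def)

lemma Estar_Pd: "0 < d \<Longrightarrow> d < 1 \<Longrightarrow> Estar {0,1} (Pd d) = {0,1} \<times> {0,1}"
  by (auto simp: Estar_def Pd_def)

lemma tv_half:
  assumes x: "x \<in> {0,1}" and t: "1 \<le> t"
  shows "tvdist {0,1} (matpow {0,1} (Pd (1/2)) t x) (\<lambda>_. 1/2) = 0"
proof -
  have "\<forall>y\<in>{0,1}. matpow {0,1} (Pd (1/2)) t x y = 1/2"
    using matpow_Pd[OF x, of _ "1/2" t] t by auto
  then show ?thesis unfolding tvdist_def by (simp)
qed

lemma mix_half_from:
  assumes x: "x \<in> {0,1}" and that: "0 \<le> e"
  shows "mixing_time_from {0,1} (Pd (1/2)) (\<lambda>_. 1/2) x e = 1"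
  unfolding mixing_time_from_def
  by (rule Least_equality) (use tv_half[OF x] that in auto)

lemma mix_half: "0 \<le> e \<Longrightarrow> mixing_time {0,1} (Pd (1/2)) (\<lambda>_. 1/2) e = 1"
  unfolding mixing_time_def using mix_half_from[of 0 e] mix_half_from[of 1 e] by simp

definition T :: "nat list set" where "T = {[0,1],[1,0],[0,1,0],[1,0,1]}"
definition ff :: "nat list \<Rightarrow> real" where "ff g = (if g \<in> T then 1/4 else 0)"

lemma paths_T:
  assumes "0 < d" "d < 1"
  shows "paths_xy {0,1} (Pd d) x y \<inter> T = {g\<in>T. hd g = x \<and> last g = y}"
  using assms by (auto simp: T_def paths_xy_def path_edges_def Estar_def Pd_def)

lemma flow_Pd:
  assumes "0 < d" "d < 1"
  shows "is_flow {0,1} (Pd d) (Pd (1/2)) (\<lambda>_. 1/2) ff"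
  unfolding is_flow_def
proof (intro conjI)
  show "\<forall>g\<in>flow_paths {0,1} (Pd d) (Pd (1/2)). 0 \<le> ff g \<and> ff g \<le> 1" by (simp add: ff_def)
  show "\<forall>(x, y)\<in>Estar {0,1} (Pd (1/2)). (\<Sum>g\<in>paths_xy {0,1} (Pd d) x y. ff g) = 1/2 * Pd (1/2) x y"
  proof
  fix e assume "e \<in> Estar {0,1} (Pd (1/2))"
  then obtain x y where e: "e = (x,y)" "x \<in> {0,1}" "y \<in> {0,1}" by (auto simp: Estar_def)
  have "(\<Sum>g\<in>paths_xy {0,1} (Pd d) x y. ff g) = (\<Sum>g\<in>paths_xy {0,1} (Pd d) x y \<inter> T. 1/4)"
    unfolding ff_def by (rule sum.inter_restrict[symmetric]) (simp add: paths_finite)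
  also have "\<dots> = (\<Sum>g\<in>{g\<in>T. hd g = x \<and> last g = y}. 1/4)" by (simp only: paths_T[OF assms])
  also have "{g\<in>T. hd g = x \<and> last g = y} = {if x = y then [x, 1-x, x] else [x,y]}"
    using e by (auto simp: T_def)
  also have "(\<Sum>g\<in>{if x = y then [x, 1-x, x] else [x,y]}. (1::real)/4) = 1/2 * Pd (1/2) x y"
    by (simp add: Pd_def)
  finally show "case e of (x, y) \<Rightarrow> (\<Sum>g\<in>paths_xy {0,1} (Pd d) x y. ff g) = 1/2 * Pd (1/2) x y"
    using e by simp
qed
qed


lemma flow_paths_finite: "finite (flow_paths {0,1} (Pd d) P')"
proof -
  have "finite (Estar {0::nat,1} P')"
    by (rule finite_subset[of _ "{0,1} \<times> {0,1}"]) (auto simp: Estar_def)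
  then show ?thesis unfolding flow_paths_def by (auto intro: paths_finite)
qed

lemma sumT_val:
  assumes "z \<in> {0,1}" "w \<in> {0,1}"
  shows "(\<Sum>g\<in>T. real (count_list (path_edges g) (z, w)) * real (path_len g) * (1/4))
    = (if z = w then 0 else 5/4)"
  using assms by (auto simp: T_def path_edges_def path_len_def)

lemma edge_cong_le:
  assumes d: "0 < d" "d \<le> 1/6" and zw: "z \<in> {0,1}" "w \<in> {0,1}"
  shows "edge_congestion {0,1} (Pd d) (\<lambda>_. 1/2) (Pd (1/2)) ff z w \<le> 3"
proof -
  let ?B = "{g\<in>flow_paths {0,1} (Pd d) (Pd (1/2)). (z, w) \<in> set (path_edges g)}"
  let ?h = "\<lambda>g. real (count_list (path_edges g) (z, w)) * real (path_len g) * ff g"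
  let ?h' = "\<lambda>g. real (count_list (path_edges g) (z, w)) * real (path_len g) * (1/4)"
  have fB: "finite ?B" using flow_paths_finite by simp
  have "(\<Sum>g\<in>?B. ?h g) = (\<Sum>g\<in>?B \<inter> T. ?h' g)"
    by (subst sum.inter_restrict[OF fB]) (auto simp: ff_def intro!: sum.cong)
  also have "\<dots> \<le> (\<Sum>g\<in>T. ?h' g)"
    by (rule sum_mono2) (auto simp: T_def)
  also have "\<dots> = (if z = w then 0 else 5/4)" by (rule sumT_val[OF zw])
  finally have le: "(\<Sum>g\<in>?B. ?h g) \<le> (if z = w then 0 else 5/4)" .
  have pos: "0 < 1 / (1/2 * Pd d z w)" using d by (simp add: Pd_def)
  have "edge_congestion {0,1} (Pd d) (\<lambda>_. 1/2) (Pd (1/2)) ff z w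
      = 1 / (1/2 * Pd d z w) * (\<Sum>g\<in>?B. ?h g)" by (simp add: edge_congestion_def)
  also have "\<dots> \<le> 1 / (1/2 * Pd d z w) * (if z = w then 0 else 5/4)"
    using mult_left_mono[OF le, of "1/(1/2*Pd d z w)"] pos by simp
  also have "\<dots> \<le> 3" using d by (auto simp: Pd_def field_simps)
  finally show ?thesis .
qed

lemma cong_le:
  assumes d: "0 < d" "d \<le> 1/6"
  shows "congestion {0,1} (Pd d) (\<lambda>_. 1/2) (Pd (1/2)) ff \<le> 3"
proof -
  have E: "Estar {0,1} (Pd d) = {0,1} \<times> {0,1}" by (rule Estar_Pd) (use d in auto)
  have H: "\<forall>e\<in>{0,1}\<times>{0,1}. (\<lambda>(z,w). edge_congestion {0,1} (Pd d) (\<lambda>_. 1/2) (Pd (1/2)) ff z w) e \<le> 3"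
  proof
    fix e :: "nat \<times> nat" assume "e \<in> {0,1}\<times>{0,1}"
    then obtain z w where e: "e = (z,w)" "z \<in> {0,1}" "w \<in> {0,1}" by (cases e) auto
    show "(\<lambda>(z,w). edge_congestion {0,1} (Pd d) (\<lambda>_. 1/2) (Pd (1/2)) ff z w) e \<le> 3"
      unfolding e(1) using edge_cong_le[OF d e(2,3)] by (simp only: case_prod_conv)
  qed
  have F: "finite ({0::nat,1}\<times>{0::nat,1})" "{0::nat,1}\<times>{0::nat,1} \<noteq> {}" by auto
  show ?thesis unfolding congestion_def E
    using H by (subst Max_le_iff) (use F in auto)
qed

lemma mix_lower:
  assumes d: "0 < d" "d < 1/2" and N: "(1 - 2*d)^N > 1/2"
  shows "N < mixing_time_from {0,1} (Pd d) (\<lambda>_. 1/2) 0 (1/4)"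
proof -
  have tv: "tvdist {0,1} (matpow {0,1} (Pd d) t 0) (\<lambda>_. 1/2) = (1-2*d)^t / 2" for t
  proof -
    have "\<bar>2*d-1\<bar> = 1-2*d" using d by auto
    then show ?thesis using tv_Pd[of d t] by simp
  qed
  let ?Q = "\<lambda>t. 0 < t \<and> (\<forall>t'\<ge>t. tvdist {0,1} (matpow {0,1} (Pd d) t' 0) (\<lambda>_. 1/2) \<le> 1/4)"
  obtain n where n: "(1-2*d)^n < 1/2" using real_arch_pow_inv[of "1/2" "1-2*d"] d by auto
  have "?Q (Suc n)"
  proof (intro conjI allI impI)
    fix t' assume "Suc n \<le> t'"
    then have "(1-2*d)^t' \<le> (1-2*d)^n" using d by (intro power_decreasing) auto
    then show "tvdist {0,1} (matpow {0,1} (Pd d) t' 0) (\<lambda>_. 1/2) \<le> 1/4" using n tv[of t'] by linarith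
  qed simp
  then have Qm: "?Q (LEAST t. ?Q t)" by (rule LeastI)
  show ?thesis
  proof (rule ccontr)
    assume "\<not> N < mixing_time_from {0,1} (Pd d) (\<lambda>_. 1/2) 0 (1/4)"
    then have "(LEAST t. ?Q t) \<le> N" by (simp add: mixing_time_from_def)
    then have "tvdist {0,1} (matpow {0,1} (Pd d) N 0) (\<lambda>_. 1/2) \<le> 1/4" using Qm by blast
    then show False using N tv[of N] by linarith
  qed
qed


theorem mainTheorem5:
  fixes C :: real
  assumes "0 < C"
  shows "\<exists>(S :: nat set) a b P P' p f.
    a \<noteq> b \<and> S = {a, b} \<and>
    ergodic S P \<and> ergodic S P' \<and>
    reversible S P p \<and> reversible S P' p \<and>
    stationary S P p \<and> stationary S P' p \<and>
    is_flow S P P' p f \<and>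
    congestion S P p P' f \<le> 3 \<and>
    real (mixing_time_from S P p a (1/4)) >
      C * congestion S P p P' f * (real (mixing_time S P' p (1 / (2 * exp 1))) + 1)
        * ln (1 / ((1/4) * p a))"
proof -
  define K where "K = C * 3 * 2 * ln 8"
  obtain N0 :: nat where N0: "K < real N0" using reals_Archimedean2 by blast
  define N where "N = Suc N0"
  have KN: "K < real N" and N1: "1 \<le> real N" using N0 by (auto simp: N_def)
  define d where "d = 1 / (8 * real N)"
  have d0: "0 < d" and d6: "d \<le> 1/6" and d2: "d < 1/2" and d1: "d < 1"
    using N1 by (auto simp: d_def field_simps)
  have "1 + real N * (- (2*d)) \<le> (1 + - (2*d))^N"
    by (rule Bernoulli_inequality) (use d2 in simp)
  moreover have "real N * (2*d) = 1/4" using N1 by (simp add: d_def field_simps)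
  ultimately have pw: "(1 - 2*d)^N > 1/2" by simp
  have mix: "real N < real (mixing_time_from {0,1} (Pd d) (\<lambda>_. 1/2) 0 (1/4))"
    using mix_lower[OF d0 d2 pw] by simp
  have mt: "mixing_time {0,1} (Pd (1/2)) (\<lambda>_. 1/2) (1 / (2 * exp 1)) = 1"
    by (rule mix_half) simp
  have cg: "congestion {0,1} (Pd d) (\<lambda>_. 1/2) (Pd (1/2)) ff \<le> 3" by (rule cong_le[OF d0 d6])
  have ln8: "ln (1 / ((1/4) * (1/2::real))) = ln 8" by simp
  have l8: "0 < ln (8::real)" by simp
  have "C * congestion {0,1} (Pd d) (\<lambda>_. 1/2) (Pd (1/2)) ff * (real 1 + 1) * ln 8
        = (C * 2 * ln 8) * congestion {0,1} (Pd d) (\<lambda>_. 1/2) (Pd (1/2)) ff" by simp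
  also have "\<dots> \<le> (C * 2 * ln 8) * 3"
    by (rule mult_left_mono[OF cg]) (use assms l8 in simp)
  also have "\<dots> = K" by (simp add: K_def)
  finally have rhs: "C * congestion {0,1} (Pd d) (\<lambda>_. 1/2) (Pd (1/2)) ff * (real 1 + 1) * ln 8 \<le> K" .
  have fin: "real (mixing_time_from {0,1} (Pd d) (\<lambda>_. 1/2) 0 (1/4)) > C * congestion {0,1} (Pd d) (\<lambda>_. 1/2) (Pd (1/2)) ff * (real (mixing_time {0,1} (Pd (1/2)) (\<lambda>_. 1/2) (1/(2*exp 1))) + 1) * ln (1 / ((1/4) * (1/2)))"
    unfolding mt ln8 using rhs KN mix by linarith
  show ?thesis
    apply (rule exI[of _ "{0,1}"], rule exI[of _ 0], rule exI[of _ 1], rule exI[of _ "Pd d"],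
        rule exI[of _ "Pd (1/2)"], rule exI[of _ "\<lambda>_. 1/2"], rule exI[of _ ff])
    apply (intro conjI)
    using ergodic_Pd[OF d0 d1] ergodic_Pd[of "1/2"] rev_Pd stat_Pd flow_Pd[OF d0 d1] cg fin
    by simp_all
qed

end
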